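(* Let $P_{II*}=P_{II}$. For partitions $\xi,\upsilon\in P_I$, one has $\mathcal C_{\uparrow\{\downarrow\{\xi\}\}\text{-unc}}=\mathcal C_{\uparrow\{\downarrow\{\upsilon\}\}\text{-unc}}$ if and only if $\xi=\upsilon$.
   Context: Let $n\ge1$, $L=\{1,\dots,n\}$, and for $i\in L$ let $\mathcal H_i$ be a Hilbert space with $1<\dim\mathcal H_i<\infty$; $\mathcal H_X=\bigotimes_{i\in X}\mathcal H_i$ and $\mathcal D_X$ is the set of density operators on $\mathcal H_X$. $P_I$ is the set of partitions of $L$ ordered by refinement. For $\xi\in P_I$, $\mathcal D_{\xi\text{-unc}}=\{\varrho\in\mathcal D_L:\varrho=\bigotimes_{X\in\xi}\varrho_X,\ \varrho_X\in\mathcal D_X\}$, and for $S\subseteq P_I$, $\mathcal D_{S\text{-unc}}=\bigcup_{\xi\in S}\mathcal D_{\xi\text{-unc}}$. $P_{II}$ is the set of nonempty down-sets of $P_I$, ordered by inclusion; $P_{III*}$ is the set of nonempty up-sets of $P_{II*}$. $\downarrow\{\xi\}=\{\upsilon\in P_I:\upsilon\preceq\xi\}$ and $\uparrow\{\boldsymbol\zeta\}=\{\boldsymbol\upsilon\in P_{II}:\boldsymbol\zeta\subseteq\boldsymbol\upsilon\}$. For $\Xi\in P_{III*}$: $\overline\Xi=P_{II*}\setminus\Xi$ and $\mathcal C_{\Xi\text{-unc}}=\bigcap_{\boldsymbol\xi'\in\overline\Xi}(\mathcal D_L\setminus\mathcal D_{\boldsymbol\xi'\text{-unc}})\cap\bigcap_{\boldsymbol\xi\in\Xi}\mathcal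 D_{\boldsymbol\xi\text{-unc}}$. *)

theory Defs
  imports Complex_Main
begin

text \<open>Local dimensions are given by d :: nat \<Rightarrow> nat (d i = dim H_i).
  The standard product basis of H_X is indexed by multi-indices a :: nat \<Rightarrow> nat
  with a i < d i for i in X and a i = 0 outside X. Operators on H_X are
  represented by their matrices in this basis, as functions of two multi-indices,
  vanishing outside the index set.\<close>

type_synonym mop = "(nat \<Rightarrow> nat) \<Rightarrow> (nat \<Rightarrow> nat) \<Rightarrow> complex"

definition Lset :: "nat \<Rightarrow> nat set" where
  "Lset n = {1..n}"

definition idx :: "(nat \<Rightarrow> nat) \<Rightarrow> nat set \<Rightarrow> (nat \<Rightarrow> nat) set" where
  "idx d X = {a. (\<forall>i\<in>X. a i < d i) \<and> (\<forall>i. i \<notin> X \<longrightarrow> a i = 0)}"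

definition res :: "(nat \<Rightarrow> nat) \<Rightarrow> nat set \<Rightarrow> (nat \<Rightarrow> nat)" where
  "res a X = (\<lambda>i. if i \<in> X then a i else 0)"

definition density :: "(nat \<Rightarrow> nat) \<Rightarrow> nat set \<Rightarrow> mop \<Rightarrow> bool" where
  "density d X \<rho> \<longleftrightarrow>
     (\<forall>a b. (a \<notin> idx d X \<or> b \<notin> idx d X) \<longrightarrow> \<rho> a b = 0) \<and>
     (\<forall>v :: (nat \<Rightarrow> nat) \<Rightarrow> complex.
        (\<Sum>a\<in>idx d X. \<Sum>b\<in>idx d X. cnj (v a) * \<rho> a b * v b) \<in> \<real> \<and>
        0 \<le> Re (\<Sum>a\<in>idx d X. \<Sum>b\<in>idx d X. cnj (v a) * \<rho> a b * v b)) \<and>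
     (\<Sum>a\<in>idx d X. \<rho> a a) = 1"

definition DL :: "(nat \<Rightarrow> nat) \<Rightarrow> nat \<Rightarrow> mop set" where
  "DL d n = {\<rho>. density d (Lset n) \<rho>}"

definition tensor :: "(nat \<Rightarrow> nat) \<Rightarrow> nat \<Rightarrow> nat set set \<Rightarrow> (nat set \<Rightarrow> mop) \<Rightarrow> mop" where
  "tensor d n \<xi> \<rho>s = (\<lambda>a b. if a \<in> idx d (Lset n) \<and> b \<in> idx d (Lset n)
      then (\<Prod>X\<in>\<xi>. \<rho>s X (res a X) (res b X)) else 0)"

text \<open>Partitions of L, and refinement (\<upsilon> \<preceq> \<xi> iff \<upsilon> is finer than \<xi>).\<close>
definition partitions :: "nat \<Rightarrow> nat set set set" where
  "partitions n = {\<xi>. (\<forall>X\<in>\<xi>. X \<noteq> {}) \<and> \<Union>\<xi> = Lset n \<and>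
       (\<forall>X\<in>\<xi>. \<forall>Y\<in>\<xi>. X \<noteq> Y \<longrightarrow> X \<inter> Y = {})}"

definition refines :: "nat set set \<Rightarrow> nat set set \<Rightarrow> bool" where
  "refines \<upsilon> \<xi> \<longleftrightarrow> (\<forall>Y\<in>\<upsilon>. \<exists>X\<in>\<xi>. Y \<subseteq> X)"

definition Dunc :: "(nat \<Rightarrow> nat) \<Rightarrow> nat \<Rightarrow> nat set set \<Rightarrow> mop set" where
  "Dunc d n \<xi> = {\<rho>. density d (Lset n) \<rho> \<and>
      (\<exists>\<rho>s. (\<forall>X\<in>\<xi>. density d X (\<rho>s X)) \<and> \<rho> = tensor d n \<xi> \<rho>s)}"

definition DSunc :: "(nat \<Rightarrow> nat) \<Rightarrow> nat \<Rightarrow> nat set set set \<Rightarrow> mop set" where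
  "DSunc d n S = (\<Union>\<xi>\<in>S. Dunc d n \<xi>)"

text \<open>P_II: nonempty down-sets of P_I (here P_II* = P_II).\<close>
definition PII :: "nat \<Rightarrow> nat set set set set" where
  "PII n = {S. S \<noteq> {} \<and> S \<subseteq> partitions n \<and>
     (\<forall>\<xi>\<in>S. \<forall>\<upsilon>\<in>partitions n. refines \<upsilon> \<xi> \<longrightarrow> \<upsilon> \<in> S)}"

definition downset :: "nat \<Rightarrow> nat set set \<Rightarrow> nat set set set" where
  "downset n \<xi> = {\<upsilon>\<in>partitions n. refines \<upsilon> \<xi>}"

definition upset :: "nat \<Rightarrow> nat set set set \<Rightarrow> nat set set set set" where
  "upset n \<zeta> = {\<upsilon>\<in>PII n. \<zeta> \<subseteq> \<upsilon>}"

text \<open>C_{\<Xi>-unc}; intersected with D_L so that empty intersections are taken in D_L.\<close>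
definition Cunc :: "(nat \<Rightarrow> nat) \<Rightarrow> nat \<Rightarrow> nat set set set set \<Rightarrow> mop set" where
  "Cunc d n \<Xi> = DL d n \<inter>
     (\<Inter>\<xi>'\<in>PII n - \<Xi>. DL d n - DSunc d n \<xi>') \<inter>
     (\<Inter>\<xi>\<in>\<Xi>. DSunc d n \<xi>)"

end

theory Submission
  imports Defs "HOL-Library.FuncSet"
begin

lemma finite_idx: assumes "finite X" shows "finite (idx d X)"
proof -
  have "idx d X \<subseteq> (\<lambda>f i. if i \<in> X then f i else 0) ` (PiE X (\<lambda>i. {..<d i}))"
  proof
    fix a assume a: "a \<in> idx d X"
    have "restrict a X \<in> PiE X (\<lambda>i. {..<d i})" using a by (auto simp: idx_def restrict_PiE_iff)
    moreover have "a = (\<lambda>i. if i \<in> X then restrict a X i else 0)"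
      using a by (auto simp: idx_def)
    ultimately show "a \<in> (\<lambda>f i. if i \<in> X then f i else 0) ` (PiE X (\<lambda>i. {..<d i}))" by blast
  qed
  moreover have "finite (PiE X (\<lambda>i. {..<d i}))" using assms by (intro finite_PiE) auto
  ultimately show ?thesis using finite_subset by blast
qed

lemma res_idx: "a \<in> idx d Y \<Longrightarrow> X \<subseteq> Y \<Longrightarrow> res a X \<in> idx d X"
  by (auto simp: idx_def res_def)

lemma pure_density:
  assumes fin: "finite X"
    and rho: "\<And>a b. \<rho> a b = (if a \<in> idx d X \<and> b \<in> idx d X then complex_of_real (v a * v b) else 0)"
    and tr: "(\<Sum>a\<in>idx d X. (v a)^2) = 1"
  shows "density d X \<rho>"
proof -
  have pos: "(\<Sum>a\<in>idx d X. \<Sum>b\<in>idx d X. cnj (w a) * \<rho> a b * w b) = complex_of_real ((cmod (\<Sum>b\<in>idx d X. complex_of_real (v b) * w b))^2)"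
    for w :: "(nat \<Rightarrow> nat) \<Rightarrow> complex"
  proof -
    let ?S = "\<Sum>b\<in>idx d X. complex_of_real (v b) * w b"
    have "(\<Sum>a\<in>idx d X. \<Sum>b\<in>idx d X. cnj (w a) * \<rho> a b * w b)
        = (\<Sum>a\<in>idx d X. \<Sum>b\<in>idx d X. (cnj (w a) * complex_of_real (v a)) * (complex_of_real (v b) * w b))"
      by (intro sum.cong refl) (simp add: rho mult.commute mult.left_commute)
    also have "\<dots> = (\<Sum>a\<in>idx d X. cnj (w a) * complex_of_real (v a)) * ?S"
      by (simp add: sum_product)
    also have "(\<Sum>a\<in>idx d X. cnj (w a) * complex_of_real (v a)) = cnj ?S"
      by (simp add: mult.commute)
    also have "cnj ?S * ?S = complex_of_real ((cmod ?S)^2)"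
      by (simp only: complex_norm_square mult.commute)
    finally show ?thesis .
  qed
  have "(\<Sum>a\<in>idx d X. \<rho> a a) = complex_of_real (\<Sum>a\<in>idx d X. (v a)^2)"
    by (simp add: rho power2_eq_square)
  then have "(\<Sum>a\<in>idx d X. \<rho> a a) = 1" using tr by simp
  moreover have "\<forall>a b. (a \<notin> idx d X \<or> b \<notin> idx d X) \<longrightarrow> \<rho> a b = 0" using rho by auto
  ultimately show ?thesis unfolding density_def using pos by (auto simp del: of_real_power)
qed


lemma res_res: "Y \<subseteq> U \<Longrightarrow> res (res a U) Y = res a Y"
  by (auto simp: res_def fun_eq_iff)

lemma idx_split_bij:
  assumes "X \<inter> U = {}"
  shows "bij_betw (\<lambda>a. (res a X, res a U)) (idx d (X \<union> U)) (idx d X \<times> idx d U)"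
proof (rule bij_betwI')
  fix a a' assume a: "a \<in> idx d (X \<union> U)" and a': "a' \<in> idx d (X \<union> U)"
  show "((res a X, res a U) = (res a' X, res a' U)) = (a = a')"
  proof
    assume h: "(res a X, res a U) = (res a' X, res a' U)"
    show "a = a'"
    proof
      fix i
      show "a i = a' i"
        using h a a' unfolding idx_def res_def
        by (cases "i \<in> X"; cases "i \<in> U") (auto dest: fun_cong[where x=i])
    qed
  qed simp
next
  fix a assume "a \<in> idx d (X \<union> U)"
  then show "(res a X, res a U) \<in> idx d X \<times> idx d U" by (auto intro: res_idx)
next
  fix p assume p: "p \<in> idx d X \<times> idx d U"
  obtain b c where bc: "p = (b, c)" "b \<in> idx d X" "c \<in> idx d U" using p by auto
  define a where "a = (\<lambda>i. if i \<in> X then b i else c i)"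
  have "a \<in> idx d (X \<union> U)" using bc unfolding a_def idx_def by auto
  moreover have "res a X = b" using bc unfolding a_def idx_def res_def by auto
  moreover have "res a U = c" using bc assms unfolding a_def idx_def res_def by (auto simp: fun_eq_iff)
  ultimately show "\<exists>a\<in>idx d (X \<union> U). p = (res a X, res a U)" using bc by auto
qed

lemma sum_prod_idx:
  fixes f :: "nat set \<Rightarrow> (nat \<Rightarrow> nat) \<Rightarrow> 'b::comm_semiring_1"
  assumes "finite F" "\<forall>X\<in>F. finite X" "\<forall>X\<in>F. \<forall>Y\<in>F. X \<noteq> Y \<longrightarrow> X \<inter> Y = {}"
  shows "(\<Sum>a\<in>idx d (\<Union>F). \<Prod>X\<in>F. f X (res a X)) = (\<Prod>X\<in>F. \<Sum>b\<in>idx d X. f X b)"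
  using assms
proof (induction F rule: finite_induct)
  case empty
  have "idx d {} = {\<lambda>_. 0}" by (auto simp: idx_def)
  then show ?case by simp
next
  case (insert X F)
  let ?U = "\<Union>F"
  have disj: "X \<inter> ?U = {}" using insert.prems(2) insert.hyps(2) by fastforce
  have finU: "finite (idx d ?U)" using insert by (intro finite_idx) auto
  have finX: "finite (idx d X)" using insert by (intro finite_idx) auto
  let ?G = "\<lambda>c. \<Prod>Y\<in>F. f Y (res c Y)"
  have "(\<Sum>a\<in>idx d (X \<union> ?U). \<Prod>Y\<in>insert X F. f Y (res a Y))
      = (\<Sum>a\<in>idx d (X \<union> ?U). (\<lambda>(b, c). f X b * ?G c) (res a X, res a ?U))"
  proof (intro sum.cong refl)
    fix a assume "a \<in> idx d (X \<union> ?U)"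
    have "(\<Prod>Y\<in>F. f Y (res a Y)) = ?G (res a ?U)"
      by (intro prod.cong refl) (simp add: res_res Union_upper)
    then show "(\<Prod>Y\<in>insert X F. f Y (res a Y)) = (\<lambda>(b, c). f X b * ?G c) (res a X, res a ?U)"
      using insert.hyps by simp
  qed
  also have "\<dots> = (\<Sum>p\<in>idx d X \<times> idx d ?U. (\<lambda>(b, c). f X b * ?G c) p)"
    by (rule sum.reindex_bij_betw[OF idx_split_bij[OF disj]])
  also have "\<dots> = (\<Sum>b\<in>idx d X. f X b) * (\<Sum>c\<in>idx d ?U. ?G c)"
    by (simp add: sum.cartesian_product[symmetric] sum_product)
  also have "(\<Sum>c\<in>idx d ?U. ?G c) = (\<Prod>Y\<in>F. \<Sum>b\<in>idx d Y. f Y b)"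
    using insert by auto
  finally show ?case using insert.hyps by simp
qed


definition one :: "nat set \<Rightarrow> nat \<Rightarrow> nat" where
  "one X = (\<lambda>i. if i \<in> X then 1 else 0)"

definition gh :: "nat set \<Rightarrow> (nat \<Rightarrow> nat) \<Rightarrow> real" where
  "gh X b = (if b = (\<lambda>_. 0) \<or> b = one X then 1 / sqrt 2 else 0)"

definition rs :: "(nat \<Rightarrow> nat) \<Rightarrow> nat set \<Rightarrow> mop" where
  "rs d X = (\<lambda>a b. if a \<in> idx d X \<and> b \<in> idx d X then complex_of_real (gh X a * gh X b) else 0)"

definition VV :: "nat set set \<Rightarrow> (nat \<Rightarrow> nat) \<Rightarrow> real" where
  "VV \<xi> a = (\<Prod>X\<in>\<xi>. gh X (res a X))"

lemma part_facts:
  assumes "\<xi> \<in> partitions n"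
  shows "finite \<xi>" "\<Union>\<xi> = Lset n" "\<And>X. X \<in> \<xi> \<Longrightarrow> X \<subseteq> Lset n"
    "\<And>X. X \<in> \<xi> \<Longrightarrow> X \<noteq> {}" "\<And>X. X \<in> \<xi> \<Longrightarrow> finite X"
    "\<forall>X\<in>\<xi>. \<forall>Y\<in>\<xi>. X \<noteq> Y \<longrightarrow> X \<inter> Y = {}"
proof -
  have u: "\<Union>\<xi> = Lset n" using assms by (simp add: partitions_def)
  then have "\<xi> \<subseteq> Pow (Lset n)" by auto
  then show "finite \<xi>" by (rule finite_subset) (simp add: Lset_def)
  show "\<Union>\<xi> = Lset n" by (rule u)
  show "\<And>X. X \<in> \<xi> \<Longrightarrow> X \<subseteq> Lset n" using u by auto
  show "\<And>X. X \<in> \<xi> \<Longrightarrow> X \<noteq> {}" using assms by (simp add: partitions_def)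
  show "\<And>X. X \<in> \<xi> \<Longrightarrow> finite X" using u by (metis Lset_def Union_upper finite_atLeastAtMost finite_subset)
  show "\<forall>X\<in>\<xi>. \<forall>Y\<in>\<xi>. X \<noteq> Y \<longrightarrow> X \<inter> Y = {}" using assms by (simp add: partitions_def)
qed

lemma zero_idx: "\<forall>i\<in>X. 1 < d i \<Longrightarrow> (\<lambda>_. 0) \<in> idx d X" by (auto simp: idx_def)

lemma one_idx: "\<forall>i\<in>X. 1 < d i \<Longrightarrow> one X \<in> idx d X" by (simp add: idx_def one_def)

lemma one_ne_zero: "X \<noteq> {} \<Longrightarrow> one X \<noteq> (\<lambda>_. 0)"
  by (auto simp: one_def fun_eq_iff)

lemma res_zero: "res (\<lambda>_. 0) X = (\<lambda>_. 0)" by (simp add: res_def fun_eq_iff)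

lemma res_one: "res (one S) X = one (S \<inter> X)" by (auto simp: res_def one_def fun_eq_iff)

lemma gh_sum:
  assumes "X \<noteq> {}" "finite X" "\<forall>i\<in>X. 1 < d i"
  shows "(\<Sum>b\<in>idx d X. (gh X b)^2) = 1"
proof -
  have "(\<Sum>b\<in>idx d X. (gh X b)^2) = (\<Sum>b\<in>{(\<lambda>_. 0), one X}. (gh X b)^2)"
    by (rule sum.mono_neutral_right) (use assms zero_idx one_idx finite_idx in \<open>auto simp: gh_def\<close>)
  also have "\<dots> = 1" using one_ne_zero[OF assms(1)] by (simp add: gh_def power_divide)
  finally show ?thesis .
qed

lemma rs_density:
  assumes "X \<noteq> {}" "finite X" "\<forall>i\<in>X. 1 < d i"
  shows "density d X (rs d X)"
  by (rule pure_density[where v = "gh X"]) (use assms gh_sum in \<open>auto simp: rs_def\<close>)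

lemma tensor_rs:
  assumes "\<xi> \<in> partitions n"
  shows "tensor d n \<xi> (rs d) a b = (if a \<in> idx d (Lset n) \<and> b \<in> idx d (Lset n)
           then complex_of_real (VV \<xi> a * VV \<xi> b) else 0)"
proof (cases "a \<in> idx d (Lset n) \<and> b \<in> idx d (Lset n)")
  case True
  have "(\<Prod>X\<in>\<xi>. rs d X (res a X) (res b X)) = (\<Prod>X\<in>\<xi>. complex_of_real (gh X (res a X) * gh X (res b X)))"
  proof (intro prod.cong refl)
    fix X assume "X \<in> \<xi>"
    then have "X \<subseteq> Lset n" using part_facts(3)[OF assms] by blast
    then have "res a X \<in> idx d X" "res b X \<in> idx d X" using True res_idx by blast+
    then show "rs d X (res a X) (res b X) = complex_of_real (gh X (res a X) * gh X (res b X))"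
      by (simp add: rs_def)
  qed
  also have "\<dots> = complex_of_real (VV \<xi> a * VV \<xi> b)"
    by (simp add: VV_def prod.distrib)
  finally show ?thesis using True by (simp add: tensor_def)
qed (auto simp: tensor_def)

lemma VV_sum:
  assumes "\<xi> \<in> partitions n" "\<forall>i\<in>Lset n. 1 < d i"
  shows "(\<Sum>a\<in>idx d (Lset n). (VV \<xi> a)^2) = 1"
proof -
  note pf = part_facts[OF assms(1)]
  have "(\<Sum>a\<in>idx d (Lset n). (VV \<xi> a)^2) = (\<Sum>a\<in>idx d (\<Union>\<xi>). \<Prod>X\<in>\<xi>. (\<lambda>X b. (gh X b)^2) X (res a X))"
    by (simp add: pf VV_def prod_power_distrib)
  also have "\<dots> = (\<Prod>X\<in>\<xi>. \<Sum>b\<in>idx d X. (gh X b)^2)"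
    by (rule sum_prod_idx) (use pf in auto)
  also have "\<dots> = (\<Prod>X\<in>\<xi>. 1)"
    using pf assms(2) by (intro prod.cong refl gh_sum) auto
  finally show ?thesis by simp
qed


lemma witness:
  assumes xi: "\<xi> \<in> partitions n" and dd: "\<forall>i\<in>Lset n. 1 < d i"
  shows "\<exists>\<rho>. \<rho> \<in> Dunc d n \<xi> \<and> (\<forall>\<pi>\<in>partitions n. \<not> refines \<xi> \<pi> \<longrightarrow> \<rho> \<notin> Dunc d n \<pi>)"
proof -
  note pf = part_facts[OF xi]
  define \<rho> where "\<rho> = tensor d n \<xi> (rs d)"
  have rho: "\<rho> a b = (if a \<in> idx d (Lset n) \<and> b \<in> idx d (Lset n)
           then complex_of_real (VV \<xi> a * VV \<xi> b) else 0)" for a b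
    unfolding \<rho>_def by (rule tensor_rs[OF xi])
  have dens: "density d (Lset n) \<rho>"
    by (rule pure_density[where v = "VV \<xi>", OF _ rho VV_sum[OF xi dd]]) (simp add: Lset_def)
  have blocks: "\<forall>X\<in>\<xi>. density d X (rs d X)"
  proof
    fix X assume X: "X \<in> \<xi>"
    then show "density d X (rs d X)" using pf(3)[OF X] pf(4)[OF X] pf(5)[OF X] dd
      by (intro rs_density) auto
  qed
  have inD: "\<rho> \<in> Dunc d n \<xi>" unfolding Dunc_def using dens blocks \<rho>_def by blast
  have diag0: "\<rho> a a = 0 \<longleftrightarrow> (\<exists>X\<in>\<xi>. gh X (res a X) = 0)" if "a \<in> idx d (Lset n)" for a
    using that pf(1) by (simp add: rho VV_def)
  have notin: "\<rho> \<notin> Dunc d n \<pi>" if \<pi>: "\<pi> \<in> partitions n" and nr: "\<not> refines \<xi> \<pi>" for \<pi>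
  proof
    assume "\<rho> \<in> Dunc d n \<pi>"
    then obtain \<sigma>s where sig: "\<rho> = tensor d n \<pi> \<sigma>s" unfolding Dunc_def by blast
    note pp = part_facts[OF \<pi>]
    obtain X0 where X0: "X0 \<in> \<xi>" "\<forall>Y\<in>\<pi>. \<not> X0 \<subseteq> Y" using nr unfolding refines_def by blast
    obtain i where i: "i \<in> X0" using pf(4)[OF X0(1)] by blast
    have "i \<in> \<Union>\<pi>" using i pf(3)[OF X0(1)] pp(2) by blast
    then obtain Y where Y: "Y \<in> \<pi>" "i \<in> Y" by blast
    obtain j where j: "j \<in> X0" "j \<notin> Y" using X0(2) Y(1) by blast
    define D where "D Z a = \<sigma>s Z (res a Z) (res a Z)" for Z a
    have diagp: "\<rho> a a = (\<Prod>Z\<in>\<pi>. D Z a)" if "a \<in> idx d (Lset n)" for a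
      using that by (simp add: sig tensor_def D_def)
    have dX0: "\<forall>k\<in>X0. 1 < d k" using dd pf(3)[OF X0(1)] by blast
    have dL: "\<forall>k\<in>Lset n. 1 < d k" by (rule dd)
    have a0: "(\<lambda>_. 0) \<in> idx d (Lset n)" using zero_idx[OF dL] .
    have a1: "one X0 \<in> idx d (Lset n)"
      using pf(3)[OF X0(1)] dd unfolding idx_def one_def by auto
    have m: "one (X0 \<inter> Y) \<in> idx d (Lset n)"
      using pf(3)[OF X0(1)] dd unfolding idx_def one_def by auto
    have "\<rho> (\<lambda>_. 0) (\<lambda>_. 0) \<noteq> 0"
      using diag0[OF a0] by (auto simp: res_zero gh_def)
    then have p0: "(\<Prod>Z\<in>\<pi>. D Z (\<lambda>_. 0)) \<noteq> 0" using diagp[OF a0] by simp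
    have "\<rho> (one X0) (one X0) \<noteq> 0"
    proof -
      have "gh X (res (one X0) X) \<noteq> 0" if X: "X \<in> \<xi>" for X
      proof (cases "X = X0")
        case True then show ?thesis by (simp add: res_one gh_def)
      next
        case False
        then have "X0 \<inter> X = {}" using pf(6) X X0(1) by blast
        then have "one (X0 \<inter> X) = (\<lambda>_. 0)" by (simp add: one_def)
        then show ?thesis by (simp add: res_one gh_def)
      qed
      then show ?thesis using diag0[OF a1] by blast
    qed
    then have p1: "(\<Prod>Z\<in>\<pi>. D Z (one X0)) \<noteq> 0" using diagp[OF a1] by simp
    then have DY: "D Y (one X0) \<noteq> 0" using pp(1) Y(1) by auto
    have "\<rho> (one (X0 \<inter> Y)) (one (X0 \<inter> Y)) = 0"
    proof -
      have "X0 \<inter> Y \<inter> X0 = X0 \<inter> Y" by blast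
      then have r: "res (one (X0 \<inter> Y)) X0 = one (X0 \<inter> Y)" by (simp add: res_one)
      have "one (X0 \<inter> Y) \<noteq> (\<lambda>_. 0)" using i Y(2) by (auto simp: one_def fun_eq_iff)
      moreover have "one (X0 \<inter> Y) \<noteq> one X0" using j by (auto simp: one_def fun_eq_iff)
      ultimately have "gh X0 (res (one (X0 \<inter> Y)) X0) = 0" using r by (simp add: gh_def)
      then show ?thesis using diag0[OF m] X0(1) by blast
    qed
    moreover have "(\<Prod>Z\<in>\<pi>. D Z (one (X0 \<inter> Y))) \<noteq> 0"
    proof -
      have eqY: "D Y (one (X0 \<inter> Y)) = D Y (one X0)"
      proof -
        have "X0 \<inter> Y \<inter> Y = X0 \<inter> Y" by blast
        then show ?thesis by (simp add: D_def res_one)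
      qed
      have eqZ: "D Z (one (X0 \<inter> Y)) = D Z (\<lambda>_. 0)" if Z: "Z \<in> \<pi> - {Y}" for Z
      proof -
        have "Z \<inter> Y = {}" using pp(6) Z Y(1) by blast
        then have "X0 \<inter> Y \<inter> Z = {}" by blast
        then have "res (one (X0 \<inter> Y)) Z = (\<lambda>_. 0)" unfolding res_one by (auto simp: one_def fun_eq_iff)
        then show ?thesis by (simp add: D_def res_zero)
      qed
      have "(\<Prod>Z\<in>\<pi>. D Z (one (X0 \<inter> Y))) = D Y (one (X0 \<inter> Y)) * (\<Prod>Z\<in>\<pi> - {Y}. D Z (one (X0 \<inter> Y)))"
        using pp(1) Y(1) by (simp add: prod.remove)
      also have "\<dots> = D Y (one X0) * (\<Prod>Z\<in>\<pi> - {Y}. D Z (\<lambda>_. 0))"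
        using eqY eqZ by simp
      finally have e: "(\<Prod>Z\<in>\<pi>. D Z (one (X0 \<inter> Y))) = D Y (one X0) * (\<Prod>Z\<in>\<pi> - {Y}. D Z (\<lambda>_. 0))" .
      have "(\<Prod>Z\<in>\<pi>. D Z (\<lambda>_. 0)) = D Y (\<lambda>_. 0) * (\<Prod>Z\<in>\<pi> - {Y}. D Z (\<lambda>_. 0))"
        using pp(1) Y(1) by (simp add: prod.remove)
      then have "(\<Prod>Z\<in>\<pi> - {Y}. D Z (\<lambda>_. 0)) \<noteq> 0" using p0 by auto
      then show ?thesis using e DY by simp
    qed
    ultimately show False using diagp[OF m] by simp
  qed
  show ?thesis using inD notin by blast
qed


lemma refines_trans: "refines a b \<Longrightarrow> refines b c \<Longrightarrow> refines a c"
  unfolding refines_def by (meson order.trans)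

lemma refines_antisym:
  assumes "\<xi> \<in> partitions n" "\<upsilon> \<in> partitions n" "refines \<xi> \<upsilon>" "refines \<upsilon> \<xi>"
  shows "\<xi> = \<upsilon>"
proof -
  have sub: "A \<subseteq> B" if h: "A \<in> partitions n" "B \<in> partitions n" "refines A B" "refines B A" for A B
  proof
    fix Y assume Y: "Y \<in> A"
    obtain X where X: "X \<in> B" "Y \<subseteq> X" using h(3) Y unfolding refines_def by blast
    obtain Y' where Y': "Y' \<in> A" "X \<subseteq> Y'" using h(4) X unfolding refines_def by blast
    have "Y \<noteq> {}" using part_facts(4)[OF h(1) Y] .
    then have "Y \<inter> Y' \<noteq> {}" using X Y' by blast
    then have "Y = Y'" using part_facts(6)[OF h(1)] Y Y' by meson
    then have "Y = X" using X Y' by (rule_tac equalityI) auto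
    then show "Y \<in> B" using X by simp
  qed
  show ?thesis using sub[OF assms] sub[OF assms(2,1,4,3)] by (rule equalityI)
qed

lemma downset_PII: "\<upsilon> \<in> partitions n \<Longrightarrow> downset n \<upsilon> \<in> PII n"
proof -
  assume u: "\<upsilon> \<in> partitions n"
  have "refines \<upsilon> \<upsilon>" by (auto simp: refines_def)
  then have "\<upsilon> \<in> downset n \<upsilon>" using u by (simp add: downset_def)
  moreover have "downset n \<upsilon> \<subseteq> partitions n" by (auto simp: downset_def)
  moreover have "\<forall>\<xi>\<in>downset n \<upsilon>. \<forall>\<upsilon>'\<in>partitions n. refines \<upsilon>' \<xi> \<longrightarrow> \<upsilon>' \<in> downset n \<upsilon>"
    unfolding downset_def using refines_trans by blast
  ultimately show ?thesis unfolding PII_def by blast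
qed

lemma in_Cunc:
  assumes "\<xi> \<in> partitions n" "\<rho> \<in> Dunc d n \<xi>"
    "\<forall>\<pi>\<in>partitions n. \<not> refines \<xi> \<pi> \<longrightarrow> \<rho> \<notin> Dunc d n \<pi>"
  shows "\<rho> \<in> Cunc d n (upset n (downset n \<xi>))"
proof -
  have rx: "refines \<xi> \<xi>" by (auto simp: refines_def)
  have DL: "\<rho> \<in> DL d n" using assms(2) by (simp add: Dunc_def DL_def)
  have A: "\<rho> \<in> DSunc d n \<zeta>" if "\<zeta> \<in> upset n (downset n \<xi>)" for \<zeta>
  proof -
    have "\<xi> \<in> \<zeta>" using that assms(1) rx by (auto simp: upset_def downset_def)
    then show ?thesis using assms(2) by (auto simp: DSunc_def)
  qed
  have B: "\<rho> \<notin> DSunc d n \<zeta>" if "\<zeta> \<in> PII n - upset n (downset n \<xi>)" for \<zeta>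
  proof
    assume "\<rho> \<in> DSunc d n \<zeta>"
    then obtain \<pi> where \<pi>: "\<pi> \<in> \<zeta>" "\<rho> \<in> Dunc d n \<pi>" by (auto simp: DSunc_def)
    have zP: "\<zeta> \<in> PII n" "\<not> downset n \<xi> \<subseteq> \<zeta>" using that by (auto simp: upset_def)
    have pp: "\<pi> \<in> partitions n" using zP(1) \<pi>(1) by (auto simp: PII_def)
    have rp: "refines \<xi> \<pi>" using assms(3) pp \<pi>(2) by blast
    have dc: "\<forall>\<xi>'\<in>\<zeta>. \<forall>\<upsilon>'\<in>partitions n. refines \<upsilon>' \<xi>' \<longrightarrow> \<upsilon>' \<in> \<zeta>"
      using zP(1) by (simp add: PII_def)
    have xz: "\<xi> \<in> \<zeta>" using dc \<pi>(1) assms(1) rp by blast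
    have "downset n \<xi> \<subseteq> \<zeta>"
    proof
      fix u assume "u \<in> downset n \<xi>"
      then have "u \<in> partitions n" "refines u \<xi>" by (auto simp: downset_def)
      then show "u \<in> \<zeta>" using dc xz by blast
    qed
    then show False using zP(2) by blast
  qed
  show ?thesis unfolding Cunc_def using DL A B by blast
qed

lemma neq_Cunc:
  assumes "\<xi> \<in> partitions n" "\<upsilon> \<in> partitions n" "\<forall>i\<in>Lset n. 1 < d i" "\<not> refines \<xi> \<upsilon>"
  shows "Cunc d n (upset n (downset n \<xi>)) \<noteq> Cunc d n (upset n (downset n \<upsilon>))"
proof
  assume eq: "Cunc d n (upset n (downset n \<xi>)) = Cunc d n (upset n (downset n \<upsilon>))"
  obtain \<rho> where r: "\<rho> \<in> Dunc d n \<xi>" "\<forall>\<pi>\<in>partitions n. \<not> refines \<xi> \<pi> \<longrightarrow> \<rho> \<notin> Dunc d n \<pi>"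
    using witness[OF assms(1,3)] by blast
  have "\<rho> \<in> Cunc d n (upset n (downset n \<upsilon>))" using in_Cunc[OF assms(1) r] eq by simp
  moreover have "downset n \<upsilon> \<in> upset n (downset n \<upsilon>)"
    using downset_PII[OF assms(2)] by (simp add: upset_def)
  ultimately have "\<rho> \<in> DSunc d n (downset n \<upsilon>)" unfolding Cunc_def by blast
  then obtain \<pi> where \<pi>: "\<pi> \<in> partitions n" "refines \<pi> \<upsilon>" "\<rho> \<in> Dunc d n \<pi>"
    by (auto simp: DSunc_def downset_def)
  then have "refines \<xi> \<pi>" using r(2) by blast
  then show False using \<pi>(2) assms(4) refines_trans by blast
qed

theorem proposition4:
  fixes n :: nat and d :: "nat \<Rightarrow> nat" and \<xi> \<upsilon> :: "nat set set"
  assumes "n \<ge> 1"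
    and "\<forall>i\<in>Lset n. 1 < d i"
    and "\<xi> \<in> partitions n" and "\<upsilon> \<in> partitions n"
  shows "Cunc d n (upset n (downset n \<xi>)) = Cunc d n (upset n (downset n \<upsilon>)) \<longleftrightarrow> \<xi> = \<upsilon>"
proof
  assume eq: "Cunc d n (upset n (downset n \<xi>)) = Cunc d n (upset n (downset n \<upsilon>))"
  have "refines \<xi> \<upsilon>" using neq_Cunc[OF assms(3,4,2)] eq by blast
  moreover have "refines \<upsilon> \<xi>" using neq_Cunc[OF assms(4,3,2)] eq[symmetric] by blast
  ultimately show "\<xi> = \<upsilon>" using refines_antisym assms(3,4) by blast
qed simp

end
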